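(* Let $H$ be a Hamiltonian (Hermitian operator) on a qubit $\mathbb{C}^2$ with incoherent basis $\{\ket{0},\ket{1}\}$, and let $H_{10}=\bra{1}H\ket{0}$. Then \[ C_{\mathrm{gen}}(H)=\max_{p\in[0,1]} 2\left|H_{10}\right|\sqrt{p(1-p)}\,\log_{2}\frac{1-p}{p}, \] and the maximum in the definition of $C_{\mathrm{gen}}(H)$ can be attained by a pure state.
   Context: The dephasing map is $\Delta(\rho)=\sum_{i}\ket{i}\!\bra{i}\rho\ket{i}\!\bra{i}$. The relative entropy of coherence of a state $\rho$ is $C_\mathrm{r}(\rho)=S(\Delta(\rho))-S(\rho)$, where $S(\rho)=-\mathrm{Tr}[\rho\log_2\rho]$. The coherence generating capacity of a Hamiltonian $H$ is \[ C_{\mathrm{gen}}(H)=\max_{\rho}\left.\frac{d}{dt}C_{\mathrm{r}}\big(e^{-iHt}\rho e^{iHt}\big)\right|_{t=0}, \] the maximum over all qubit density matrices $\rho$; the variable $p$ plays the role of the diagonal entry $\rho_{00}=\bra{0}\rho\ket{0}$. *)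

theory Defs
  imports "HOL-Analysis.Analysis"
begin

text \<open>Qubit operators: 2x2 complex matrices indexed by the type 2 = {0,1};
  index 0 is ket 0 and index 1 is ket 1 (the incoherent basis).\<close>

type_synonym qmat = "complex^2^2"

definition adj :: "qmat \<Rightarrow> qmat" where
  "adj A = (\<chi> i j. cnj (A $ j $ i))"

definition hermitian :: "qmat \<Rightarrow> bool" where
  "hermitian A \<longleftrightarrow> adj A = A"

definition unitary :: "qmat \<Rightarrow> bool" where
  "unitary U \<longleftrightarrow> adj U ** U = mat 1"

definition diagm :: "(2 \<Rightarrow> complex) \<Rightarrow> qmat" where
  "diagm d = (\<chi> i j. if i = j then d i else 0)"

definition mfun :: "(real \<Rightarrow> complex) \<Rightarrow> qmat \<Rightarrow> qmat" where
  "mfun f A = (THE B. \<exists>U d. unitary U \<and> A = U ** diagm (\<lambda>i. complex_of_real (d i)) ** adj U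
                          \<and> B = U ** diagm (\<lambda>i. f (d i)) ** adj U)"

definition density_matrix :: "qmat \<Rightarrow> bool" where
  "density_matrix \<rho> \<longleftrightarrow> hermitian \<rho> \<and> trace \<rho> = 1 \<and>
     (\<forall>x::complex^2. 0 \<le> Re (\<Sum>i\<in>UNIV. \<Sum>j\<in>UNIV. cnj (x $ i) * \<rho> $ i $ j * x $ j))"

definition vN_entropy :: "qmat \<Rightarrow> real" where
  "vN_entropy \<rho> = - Re (trace (\<rho> ** mfun (\<lambda>x. complex_of_real (log 2 x)) \<rho>))"

definition dephase :: "qmat \<Rightarrow> qmat" where
  "dephase \<rho> = (\<chi> i j. if i = j then \<rho> $ i $ i else 0)"

definition coh_rel :: "qmat \<Rightarrow> real" where
  "coh_rel \<rho> = vN_entropy (dephase \<rho>) - vN_entropy \<rho>"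

definition evolve :: "qmat \<Rightarrow> real \<Rightarrow> qmat \<Rightarrow> qmat" where
  "evolve H t \<rho> = mfun (\<lambda>x. exp (- \<i> * complex_of_real (x * t))) H ** \<rho>
                   ** mfun (\<lambda>x. exp (\<i> * complex_of_real (x * t))) H"

definition coh_rate :: "qmat \<Rightarrow> qmat \<Rightarrow> real" where
  "coh_rate H \<rho> = deriv (\<lambda>t. coh_rel (evolve H t \<rho>)) 0"

definition C_gen :: "qmat \<Rightarrow> real" where
  "C_gen H = Sup {coh_rate H \<rho> | \<rho>. density_matrix \<rho>}"

definition pure_state :: "complex^2 \<Rightarrow> qmat" where
  "pure_state \<psi> = (\<chi> i j. \<psi> $ i * cnj (\<psi> $ j))"

end

theory Submission
  imports Defs "HOL-Real_Asymp.Real_Asymp"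
begin


definition M2 :: "complex \<Rightarrow> complex \<Rightarrow> complex \<Rightarrow> complex \<Rightarrow> qmat" where
  "M2 a b c d = (\<chi> i j. if i = 1 then (if j = 1 then a else b) else (if j = 1 then c else d))"

lemma two_ne: "(2::2) \<noteq> 1" "(1::2) \<noteq> 2" "(0::2) = 2" by simp_all

lemma M2_nth[simp]: "M2 a b c d $ 1 $ 1 = a" "M2 a b c d $ 1 $ 2 = b" "M2 a b c d $ 2 $ 1 = c" "M2 a b c d $ 2 $ 2 = d"
  by (simp_all add: M2_def)

lemma M2_eta: "A = M2 (A$1$1) (A$1$2) (A$2$1) (A$2$2)"
  by (simp add: vec_eq_iff forall_2 M2_def)

lemma M2_cases: obtains a b c d where "A = M2 a b c d"
  using M2_eta by blast

lemma M2_mult[simp]: "M2 a b c d ** M2 a' b' c' d' = M2 (a*a'+b*c') (a*b'+b*d') (c*a'+d*c') (c*b'+d*d')"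
  by (simp add: vec_eq_iff forall_2 matrix_matrix_mult_def sum_2)

lemma M2_eq_iff[simp]: "M2 a b c d = M2 a' b' c' d' \<longleftrightarrow> a=a' \<and> b=b' \<and> c=c' \<and> d=d'"
  by (metis M2_nth)

lemma adj_M2[simp]: "adj (M2 a b c d) = M2 (cnj a) (cnj c) (cnj b) (cnj d)"
  by (simp add: vec_eq_iff forall_2 adj_def)

lemma diagm_M2: "diagm e = M2 (e 1) 0 0 (e 2)"
  by (simp add: vec_eq_iff forall_2 diagm_def)

lemma mat1_M2: "mat 1 = M2 1 0 0 1"
  by (simp add: vec_eq_iff forall_2 mat_def)

lemma trace_M2[simp]: "trace (M2 a b c d) = a + d"
  by (simp add: trace_def sum_2)

lemma quad_M2: "(\<Sum>i\<in>UNIV. \<Sum>j\<in>UNIV. cnj (x $ i) * M2 a b c d $ i $ j * x $ j) =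
   cnj (x$1) * a * x$1 + cnj (x$1) * b * x$2 + cnj (x$2) * c * x$1 + cnj (x$2) * d * x$2"
  by (simp add: sum_2)

lemma adj_mult: "adj (A ** B) = adj B ** adj A"
  by (cases A rule: M2_cases; cases B rule: M2_cases) (simp add: algebra_simps)

lemma adj_adj[simp]: "adj (adj A) = A"
  by (cases A rule: M2_cases) simp

lemma adj_mat1[simp]: "adj (mat 1) = mat 1"
  by (simp add: mat1_M2)

lemma unitary_right: "unitary U \<Longrightarrow> U ** adj U = mat 1"
  unfolding unitary_def using matrix_left_right_inverse by blast

lemma unitary_mat1: "unitary (mat 1)"
  by (simp add: unitary_def)

lemma unitary_mult: "unitary U \<Longrightarrow> unitary V \<Longrightarrow> unitary (U ** V)"
  unfolding unitary_def adj_mult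
  by (metis matrix_mul_assoc matrix_mul_lid)

lemma diag_intertwine:
  fixes d d' :: "2 \<Rightarrow> real"
  assumes "W ** diagm (\<lambda>i. complex_of_real (d i)) = diagm (\<lambda>i. complex_of_real (d' i)) ** W"
  shows "W ** diagm (\<lambda>i. f (d i)) = diagm (\<lambda>i. f (d' i)) ** W"
proof -
  obtain a b c e where W: "W = M2 a b c e" by (rule M2_cases)
  from assms have h: "a * d 1 = d' 1 * a" "b * d 2 = d' 1 * b" "c * d 1 = d' 2 * c" "e * d 2 = d' 2 * e"
    by (simp_all add: W diagm_M2)
  have k: "x * complex_of_real u = complex_of_real v * x \<Longrightarrow> x * f u = f v * x" for x u v
    by (cases "x = 0") (auto simp: mult.commute)
  show ?thesis using k[OF h(1)] k[OF h(2)] k[OF h(3)] k[OF h(4)] by (simp add: W diagm_M2)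
qed

lemma mfun_eq:
  assumes U: "unitary U" and A: "A = U ** diagm (\<lambda>i. complex_of_real (d i)) ** adj U"
  shows "mfun f A = U ** diagm (\<lambda>i. f (d i)) ** adj U"
  unfolding mfun_def
proof (rule the_equality)
  show "\<exists>U' d'. unitary U' \<and> A = U' ** diagm (\<lambda>i. complex_of_real (d' i)) ** adj U'
        \<and> U ** diagm (\<lambda>i. f (d i)) ** adj U = U' ** diagm (\<lambda>i. f (d' i)) ** adj U'"
    using U A by blast
next
  fix B assume "\<exists>U' d'. unitary U' \<and> A = U' ** diagm (\<lambda>i. complex_of_real (d' i)) ** adj U' \<and>
                  B = U' ** diagm (\<lambda>i. f (d' i)) ** adj U'"
  then obtain U' d' where U': "unitary U'" and A': "A = U' ** diagm (\<lambda>i. complex_of_real (d' i)) ** adj U'"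
    and B: "B = U' ** diagm (\<lambda>i. f (d' i)) ** adj U'" by blast
  define W where "W = adj U' ** U"
  have l1: "adj U ** U = mat 1" "adj U' ** U' = mat 1" using U U' by (simp_all add: unitary_def)
  have r1: "U ** adj U = mat 1" "U' ** adj U' = mat 1" using U U' by (simp_all add: unitary_right)
  have e1: "X ** adj U ** U = X" "X ** adj U' ** U' = X" "X ** U ** adj U = X" "X ** U' ** adj U' = X" for X
    using l1 r1 by (simp_all add: matrix_mul_assoc[symmetric])
  have c1: "adj U' ** A ** U = W ** diagm (\<lambda>i. complex_of_real (d i))"
    unfolding A W_def by (simp add: matrix_mul_assoc e1)
  have c2: "adj U' ** A ** U = diagm (\<lambda>i. complex_of_real (d' i)) ** W"
    unfolding A' W_def by (simp add: matrix_mul_assoc e1 l1)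
  have "W ** diagm (\<lambda>i. f (d i)) = diagm (\<lambda>i. f (d' i)) ** W"
    using diag_intertwine[of W d d' f] c1 c2 by simp
  note inter = this
  have wadj: "W ** adj U = adj U'" unfolding W_def by (simp only: matrix_mul_assoc[symmetric] r1 matrix_mul_rid)
  have uw: "U' ** W = U" unfolding W_def by (simp only: matrix_mul_assoc r1 matrix_mul_lid)
  have "B = U' ** diagm (\<lambda>i. f (d' i)) ** (W ** adj U)" by (simp only: B wadj)
  also have "\<dots> = U' ** (diagm (\<lambda>i. f (d' i)) ** W) ** adj U" by (simp only: matrix_mul_assoc)
  also have "\<dots> = U' ** (W ** diagm (\<lambda>i. f (d i))) ** adj U" by (simp only: inter)
  also have "\<dots> = (U' ** W) ** diagm (\<lambda>i. f (d i)) ** adj U" by (simp only: matrix_mul_assoc)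
  finally show "B = U ** diagm (\<lambda>i. f (d i)) ** adj U" by (simp only: uw)
qed


lemma spectral_2:
  assumes "hermitian A"
  shows "\<exists>U d. unitary U \<and> A = U ** diagm (\<lambda>i. complex_of_real (d i)) ** adj U"
proof -
  obtain a b c e where A: "A = M2 a b c e" by (rule M2_cases)
  from assms have h: "cnj a = a" "cnj c = b" "cnj e = e"
    by (auto simp: hermitian_def A)
  define \<alpha> where "\<alpha> = Re a"
  define \<gamma> where "\<gamma> = Re e"
  have a: "a = complex_of_real \<alpha>" unfolding \<alpha>_def using h(1) by (simp add: complex_eq_iff)
  have e: "e = complex_of_real \<gamma>" unfolding \<gamma>_def using h(3) by (simp add: complex_eq_iff)
  have c: "c = cnj b" using h(2) by (metis complex_cnj_cnj)
  show ?thesis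
  proof (cases "b = 0")
    case True
    show ?thesis
      by (rule exI[of _ "mat 1"], rule exI[of _ "\<lambda>i. if i = 1 then \<alpha> else \<gamma>"])
        (simp add: unitary_def A a e c True diagm_M2 mat1_M2)
  next
    case False
    define B where "B = cmod b"
    define \<delta> where "\<delta> = (\<alpha> - \<gamma>) / 2"
    define r where "r = sqrt (\<delta>^2 + B^2)"
    define \<mu>1 where "\<mu>1 = r - \<delta>"
    define \<mu>2 where "\<mu>2 = - r - \<delta>"
    define s1 where "s1 = 1 / sqrt (B^2 + \<mu>1^2)"
    define s2 where "s2 = 1 / sqrt (B^2 + \<mu>2^2)"
    have Bpos: "B > 0" using False by (simp add: B_def)
    have rr: "r^2 = \<delta>^2 + B^2" unfolding r_def by simp
    have bb: "cnj b * b = complex_of_real (B^2)" unfolding B_def complex_norm_square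
      by (simp add: complex_norm_square mult.commute)
    have s1s: "s1^2 * (B^2 + \<mu>1^2) = 1" unfolding s1_def using Bpos
      by (simp add: power_divide)
    have s2s: "s2^2 * (B^2 + \<mu>2^2) = 1" unfolding s2_def using Bpos
      by (simp add: power_divide)
    have mm: "\<mu>1 * \<mu>2 = -(B^2)" unfolding \<mu>1_def \<mu>2_def using rr by (simp add: algebra_simps power2_eq_square)
    have ev1: "B^2 + \<gamma> * \<mu>1 = \<mu>1 * (\<alpha> + \<mu>1)"
    proof -
      have "\<mu>1 * (\<alpha> + \<mu>1) - \<gamma> * \<mu>1 = r^2 - \<delta>^2" unfolding \<mu>1_def \<delta>_def
        by (simp add: field_simps power2_eq_square)
      then show ?thesis using rr by linarith
    qed
    have ev2: "B^2 + \<gamma> * \<mu>2 = \<mu>2 * (\<alpha> + \<mu>2)"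
    proof -
      have "\<mu>2 * (\<alpha> + \<mu>2) - \<gamma> * \<mu>2 = r^2 - \<delta>^2" unfolding \<mu>2_def \<delta>_def
        by (simp add: field_simps power2_eq_square)
      then show ?thesis using rr by linarith
    qed
    define U where "U = M2 (b * of_real s1) (b * of_real s2) (of_real (\<mu>1 * s1)) (of_real (\<mu>2 * s2))"
    define d where "d = (\<lambda>i::2. if i = 1 then \<alpha> + \<mu>1 else \<alpha> + \<mu>2)"
    have u11: "cnj (b * of_real s1) * (b * of_real s1) + of_real (\<mu>1 * s1) * of_real (\<mu>1 * s1) = 1"
    proof -
      have "cnj (b * of_real s1) * (b * of_real s1) + of_real (\<mu>1 * s1) * of_real (\<mu>1 * s1)
         = (cnj b * b) * of_real (s1^2) + of_real (\<mu>1^2 * s1^2)" by (simp add: power2_eq_square)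
      also have "\<dots> = of_real (s1^2 * (B^2 + \<mu>1^2))" unfolding bb of_real_mult[symmetric] of_real_add[symmetric]
        by (simp add: algebra_simps)
      finally show ?thesis using s1s by simp
    qed
    have u22: "cnj (b * of_real s2) * (b * of_real s2) + of_real (\<mu>2 * s2) * of_real (\<mu>2 * s2) = 1"
    proof -
      have "cnj (b * of_real s2) * (b * of_real s2) + of_real (\<mu>2 * s2) * of_real (\<mu>2 * s2)
         = (cnj b * b) * of_real (s2^2) + of_real (\<mu>2^2 * s2^2)" by (simp add: power2_eq_square)
      also have "\<dots> = of_real (s2^2 * (B^2 + \<mu>2^2))" unfolding bb of_real_mult[symmetric] of_real_add[symmetric]
        by (simp add: algebra_simps)
      finally show ?thesis using s2s by simp
    qed
    have u12: "cnj (b * of_real s1) * (b * of_real s2) + of_real (\<mu>1 * s1) * of_real (\<mu>2 * s2) = 0"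
    proof -
      have "cnj (b * of_real s1) * (b * of_real s2) + of_real (\<mu>1 * s1) * of_real (\<mu>2 * s2)
         = (cnj b * b) * of_real (s1 * s2) + of_real (\<mu>1 * \<mu>2 * s1 * s2)" by (simp add: algebra_simps)
      also have "\<dots> = of_real (s1 * s2 * (B^2 + \<mu>1 * \<mu>2))" unfolding bb of_real_mult[symmetric] of_real_add[symmetric]
        by (simp add: algebra_simps)
      finally show ?thesis using mm by simp
    qed
    have u21: "cnj (b * of_real s2) * (b * of_real s1) + of_real (\<mu>2 * s2) * of_real (\<mu>1 * s1) = 0"
      using arg_cong[OF u12, of cnj] by (simp add: mult.commute)
    have uni: "unitary U"
      unfolding unitary_def U_def mat1_M2 using u11 u12 u21 u22 by simp
    have AU: "A ** U = U ** diagm (\<lambda>i. complex_of_real (d i))"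
    proof -
      have r1: "cnj b * (b * of_real s1) + of_real \<gamma> * of_real (\<mu>1 * s1) = of_real (\<mu>1 * s1) * of_real (\<alpha> + \<mu>1)"
      proof -
        have "cnj b * (b * of_real s1) + of_real \<gamma> * of_real (\<mu>1 * s1) = (cnj b * b) * of_real s1 + of_real (\<gamma> * \<mu>1 * s1)"
          by (simp add: algebra_simps)
        also have "\<dots> = of_real (s1 * (B^2 + \<gamma> * \<mu>1))" unfolding bb of_real_mult[symmetric] of_real_add[symmetric]
          by (simp add: algebra_simps)
        finally show ?thesis unfolding ev1 by (simp add: algebra_simps)
      qed
      have r2: "cnj b * (b * of_real s2) + of_real \<gamma> * of_real (\<mu>2 * s2) = of_real (\<mu>2 * s2) * of_real (\<alpha> + \<mu>2)"
      proof -
        have "cnj b * (b * of_real s2) + of_real \<gamma> * of_real (\<mu>2 * s2) = (cnj b * b) * of_real s2 + of_real (\<gamma> * \<mu>2 * s2)"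
          by (simp add: algebra_simps)
        also have "\<dots> = of_real (s2 * (B^2 + \<gamma> * \<mu>2))" unfolding bb of_real_mult[symmetric] of_real_add[symmetric]
          by (simp add: algebra_simps)
        finally show ?thesis unfolding ev2 by (simp add: algebra_simps)
      qed
      show ?thesis unfolding A U_def diagm_M2 d_def using r1 r2 by (simp add: a e c algebra_simps)
    qed
    have "A = A ** (U ** adj U)" using unitary_right[OF uni] by simp
    also have "\<dots> = U ** diagm (\<lambda>i. complex_of_real (d i)) ** adj U" by (simp add: matrix_mul_assoc AU)
    finally show ?thesis using uni by blast
  qed
qed

lemma mfun_conj:
  assumes W: "unitary W" and A: "hermitian A"
  shows "mfun f (W ** A ** adj W) = W ** mfun f A ** adj W"
proof -
  obtain U d where U: "unitary U" and Ad: "A = U ** diagm (\<lambda>i. complex_of_real (d i)) ** adj U"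
    using spectral_2[OF A] by blast
  have WU: "unitary (W ** U)" using W U by (rule unitary_mult)
  have "W ** A ** adj W = (W ** U) ** diagm (\<lambda>i. complex_of_real (d i)) ** adj (W ** U)"
    by (simp add: Ad adj_mult matrix_mul_assoc)
  then have "mfun f (W ** A ** adj W) = (W ** U) ** diagm (\<lambda>i. f (d i)) ** adj (W ** U)"
    using mfun_eq[OF WU] by blast
  also have "\<dots> = W ** mfun f A ** adj W"
    using mfun_eq[OF U Ad] by (simp add: adj_mult matrix_mul_assoc)
  finally show ?thesis .
qed

lemma hermitian_conj: "hermitian A \<Longrightarrow> hermitian (W ** A ** adj W)"
  unfolding hermitian_def by (simp add: adj_mult matrix_mul_assoc)

lemma trace_conj: "unitary W \<Longrightarrow> trace (W ** X ** adj W) = trace X"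
  unfolding unitary_def by (metis trace_mul_sym matrix_mul_assoc matrix_mul_lid)

lemma vN_conj:
  assumes W: "unitary W" and A: "hermitian A"
  shows "vN_entropy (W ** A ** adj W) = vN_entropy A"
proof -
  have l: "adj W ** W = mat 1" using W by (simp add: unitary_def)
  have "(W ** A ** adj W) ** (W ** mfun (\<lambda>x. complex_of_real (log 2 x)) A ** adj W)
      = W ** (A ** mfun (\<lambda>x. complex_of_real (log 2 x)) A) ** adj W"
    by (simp add: matrix_mul_assoc[symmetric]) (simp add: matrix_mul_assoc l)
  then show ?thesis unfolding vN_entropy_def mfun_conj[OF W A] by (simp add: trace_conj[OF W])
qed

lemma density_conj:
  assumes W: "unitary W" and R: "density_matrix R"
  shows "density_matrix (W ** R ** adj W)"
proof -
  have h: "hermitian R" and t: "trace R = 1" and q: "\<And>x. 0 \<le> Re (\<Sum>i\<in>UNIV. \<Sum>j\<in>UNIV. cnj (x $ i) * R $ i $ j * x $ j)"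
    using R unfolding density_matrix_def by auto
  have "0 \<le> Re (\<Sum>i\<in>UNIV. \<Sum>j\<in>UNIV. cnj (x $ i) * (W ** R ** adj W) $ i $ j * x $ j)" for x :: "complex^2"
  proof -
    obtain a b c e where Rm: "R = M2 a b c e" by (rule M2_cases)
    obtain w1 w2 w3 w4 where Wm: "W = M2 w1 w2 w3 w4" by (rule M2_cases)
    have "(\<Sum>i\<in>UNIV. \<Sum>j\<in>UNIV. cnj (x $ i) * (W ** R ** adj W) $ i $ j * x $ j)
       = (\<Sum>i\<in>UNIV. \<Sum>j\<in>UNIV. cnj ((adj W *v x) $ i) * R $ i $ j * (adj W *v x) $ j)"
      unfolding Rm Wm by (simp add: sum_2 matrix_vector_mult_def algebra_simps)
    then show ?thesis using q by simp
  qed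
  then show ?thesis using h t W unfolding density_matrix_def
    by (simp add: hermitian_conj trace_conj)
qed

lemma diagm_conj: "adj (diagm e) = diagm (\<lambda>i. cnj (e i))"
  by (simp add: diagm_M2)

lemma vN_diag: "vN_entropy (diagm (\<lambda>i. complex_of_real (q i))) = - (q 1 * log 2 (q 1) + q 2 * log 2 (q 2))"
proof -
  have "diagm (\<lambda>i. complex_of_real (q i)) = mat 1 ** diagm (\<lambda>i. complex_of_real (q i)) ** adj (mat 1)"
    by simp
  from mfun_eq[OF unitary_mat1 this, of "\<lambda>x. complex_of_real (log 2 x)"]
  have "mfun (\<lambda>x. complex_of_real (log 2 x)) (diagm (\<lambda>i. complex_of_real (q i))) =
        diagm (\<lambda>i. complex_of_real (log 2 (q i)))" by simp
  then show ?thesis unfolding vN_entropy_def by (simp add: diagm_M2)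
qed

definition Ez :: "qmat \<Rightarrow> (2 \<Rightarrow> real) \<Rightarrow> complex \<Rightarrow> qmat" where
  "Ez U d z = U ** diagm (\<lambda>k. exp (- \<i> * complex_of_real (d k) * z)) ** adj U"
definition Fz :: "qmat \<Rightarrow> (2 \<Rightarrow> real) \<Rightarrow> complex \<Rightarrow> qmat" where
  "Fz U d z = U ** diagm (\<lambda>k. exp (\<i> * complex_of_real (d k) * z)) ** adj U"

lemma evolve_eq:
  assumes U: "unitary U" and Hd: "H = U ** diagm (\<lambda>i. complex_of_real (d i)) ** adj U"
  shows "evolve H t R = Ez U d (of_real t) ** R ** Fz U d (of_real t)"
proof -
  have "mfun (\<lambda>x. exp (- \<i> * complex_of_real (x * t))) H = Ez U d (of_real t)"
    unfolding mfun_eq[OF U Hd] Ez_def by (simp add: mult.assoc)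
  moreover have "mfun (\<lambda>x. exp (\<i> * complex_of_real (x * t))) H = Fz U d (of_real t)"
    unfolding mfun_eq[OF U Hd] Fz_def by (simp add: mult.assoc)
  ultimately show ?thesis unfolding evolve_def by simp
qed

lemma Fz_adj: "Fz U d (of_real t) = adj (Ez U d (of_real t))"
  unfolding Fz_def Ez_def by (simp add: adj_mult diagm_conj exp_cnj matrix_mul_assoc)

lemma unitary_adj: "unitary U \<Longrightarrow> unitary (adj U)"
  unfolding unitary_def using unitary_right[of U] by (simp add: unitary_def)

lemma unitary_Ez: "unitary U \<Longrightarrow> unitary (Ez U d (of_real t))"
proof -
  assume U: "unitary U"
  have D: "unitary (diagm (\<lambda>k. exp (- \<i> * complex_of_real (d k) * complex_of_real t)))"
    unfolding unitary_def diagm_conj by (simp add: diagm_M2 mat1_M2 exp_cnj exp_add[symmetric])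
  show ?thesis unfolding Ez_def by (intro unitary_mult U D unitary_adj)
qed

lemma Ez0: "unitary U \<Longrightarrow> Ez U d 0 = mat 1"
  unfolding Ez_def by (simp add: diagm_M2 mat1_M2[symmetric] unitary_right)

lemma Fz0: "unitary U \<Longrightarrow> Fz U d 0 = mat 1"
  unfolding Fz_def by (simp add: diagm_M2 mat1_M2[symmetric] unitary_right)

definition hb :: "real \<Rightarrow> real" where
  "hb x = - (x * log 2 x + (1 - x) * log 2 (1 - x))"

lemma dephase_herm: "hermitian S \<Longrightarrow> dephase S = diagm (\<lambda>i. complex_of_real (Re (S $ i $ i)))"
proof -
  assume "hermitian S"
  moreover obtain a b c e where Sm: "S = M2 a b c e" by (rule M2_cases)
  ultimately have "cnj a = a" "cnj e = e" by (auto simp: hermitian_def)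
  then have "a = of_real (Re a)" "e = of_real (Re e)" by (simp_all add: complex_eq_iff)
  then show ?thesis unfolding Sm by (simp add: diagm_M2 dephase_def vec_eq_iff forall_2 M2_def)
qed

lemma coh_rel_evolve:
  assumes H: "hermitian H" and R: "density_matrix R"
  shows "coh_rel (evolve H t R) = hb (Re ((evolve H t R) $ 1 $ 1)) - vN_entropy R"
proof -
  obtain U d where U: "unitary U" and Hd: "H = U ** diagm (\<lambda>i. complex_of_real (d i)) ** adj U"
    using spectral_2[OF H] by blast
  define W where "W = Ez U d (of_real t)"
  have W: "unitary W" unfolding W_def using U by (rule unitary_Ez)
  have ev: "evolve H t R = W ** R ** adj W" unfolding evolve_eq[OF U Hd] W_def Fz_adj ..
  have D: "density_matrix (W ** R ** adj W)" using density_conj[OF W R] .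
  then have hS: "hermitian (W ** R ** adj W)" and tS: "trace (W ** R ** adj W) = 1"
    unfolding density_matrix_def by auto
  have hR: "hermitian R" using R unfolding density_matrix_def by auto
  obtain a b c e where Sm: "W ** R ** adj W = M2 a b c e" by (rule M2_cases)
  have "Re e = 1 - Re a" using tS unfolding Sm by (simp add: complex_eq_iff)
  then have "dephase (W ** R ** adj W) = diagm (\<lambda>i. complex_of_real (if i = 1 then Re a else 1 - Re a))"
    unfolding dephase_herm[OF hS] unfolding Sm by (simp add: diagm_M2)
  then have "vN_entropy (dephase (W ** R ** adj W)) = hb (Re a)"
    using vN_diag[of "\<lambda>i. if i = 1 then Re a else 1 - Re a"] unfolding hb_def by simp
  then show ?thesis unfolding coh_rel_def ev vN_conj[OF W hR] by (simp add: Sm)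
qed

definition mhasderiv :: "(complex \<Rightarrow> qmat) \<Rightarrow> qmat \<Rightarrow> complex \<Rightarrow> bool" where
  "mhasderiv A A' z \<longleftrightarrow> (\<forall>i j. ((\<lambda>z. A z $ i $ j) has_field_derivative A' $ i $ j) (at z))"

lemma mhd_mult:
  assumes "mhasderiv A A' z" "mhasderiv B B' z"
  shows "mhasderiv (\<lambda>z. A z ** B z) (A' ** B z + A z ** B') z"
  using assms unfolding mhasderiv_def
  by (auto simp: matrix_matrix_mult_def sum_2 algebra_simps intro!: derivative_eq_intros)

lemma mhd_lconst:
  assumes "mhasderiv B B' z"
  shows "mhasderiv (\<lambda>z. C ** B z) (C ** B') z"
  using assms unfolding mhasderiv_def
  by (auto simp: matrix_matrix_mult_def sum_2 algebra_simps intro!: derivative_eq_intros)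

lemma mhd_rconst:
  assumes "mhasderiv B B' z"
  shows "mhasderiv (\<lambda>z. B z ** C) (B' ** C) z"
  using assms unfolding mhasderiv_def
  by (auto simp: matrix_matrix_mult_def sum_2 algebra_simps intro!: derivative_eq_intros)

lemma mhd_diag: "mhasderiv (\<lambda>z. diagm (\<lambda>k. exp (c k * z))) (diagm (\<lambda>k. c k * exp (c k * z))) z"
  unfolding mhasderiv_def diagm_def
  by (auto intro!: derivative_eq_intros)

lemma scale_H:
  assumes Hd: "H = U ** diagm (\<lambda>i. complex_of_real (d i)) ** adj U"
  shows "U ** diagm (\<lambda>k. c * complex_of_real (d k)) ** adj U = M2 (c * H$1$1) (c * H$1$2) (c * H$2$1) (c * H$2$2)"
proof -
  obtain u1 u2 u3 u4 where Um: "U = M2 u1 u2 u3 u4" by (rule M2_cases)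
  show ?thesis unfolding Hd Um by (simp add: diagm_M2 algebra_simps)
qed

lemma P_deriv:
  assumes U: "unitary U" and Hd: "H = U ** diagm (\<lambda>i. complex_of_real (d i)) ** adj U"
  shows "((\<lambda>z. (Ez U d z ** R ** Fz U d z) $ 1 $ 1) has_field_derivative
          (- \<i> * H$1$2 * R$2$1 + \<i> * R$1$2 * H$2$1)) (at 0)"
proof -
  have dE: "mhasderiv (Ez U d) (U ** diagm (\<lambda>k. (- \<i> * complex_of_real (d k)) * exp ((- \<i> * complex_of_real (d k)) * 0)) ** adj U) 0"
    unfolding Ez_def by (intro mhd_rconst mhd_lconst mhd_diag)
  have dF: "mhasderiv (Fz U d) (U ** diagm (\<lambda>k. (\<i> * complex_of_real (d k)) * exp ((\<i> * complex_of_real (d k)) * 0)) ** adj U) 0"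
    unfolding Fz_def by (intro mhd_rconst mhd_lconst mhd_diag)
  have dE': "mhasderiv (Ez U d) (M2 (- \<i> * H$1$1) (- \<i> * H$1$2) (- \<i> * H$2$1) (- \<i> * H$2$2)) 0"
    using dE unfolding scale_H[OF Hd, symmetric] by simp
  have dF': "mhasderiv (Fz U d) (M2 (\<i> * H$1$1) (\<i> * H$1$2) (\<i> * H$2$1) (\<i> * H$2$2)) 0"
    using dF unfolding scale_H[OF Hd, symmetric] by simp
  have "mhasderiv (\<lambda>z. Ez U d z ** R ** Fz U d z)
     (M2 (- \<i> * H$1$1) (- \<i> * H$1$2) (- \<i> * H$2$1) (- \<i> * H$2$2) ** R ** Fz U d 0 +
      Ez U d 0 ** R ** M2 (\<i> * H$1$1) (\<i> * H$1$2) (\<i> * H$2$1) (\<i> * H$2$2)) 0"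
    by (intro mhd_mult mhd_rconst dE' dF')
  then have "((\<lambda>z. (Ez U d z ** R ** Fz U d z) $ 1 $ 1) has_field_derivative
     (M2 (- \<i> * H$1$1) (- \<i> * H$1$2) (- \<i> * H$2$1) (- \<i> * H$2$2) ** R ** mat 1 +
      mat 1 ** R ** M2 (\<i> * H$1$1) (\<i> * H$1$2) (\<i> * H$2$1) (\<i> * H$2$2)) $ 1 $ 1) (at 0)"
    unfolding mhasderiv_def Ez0[OF U] Fz0[OF U] by blast
  moreover have "(M2 (- \<i> * H$1$1) (- \<i> * H$1$2) (- \<i> * H$2$1) (- \<i> * H$2$2) ** R ** mat 1 +
      mat 1 ** R ** M2 (\<i> * H$1$1) (\<i> * H$1$2) (\<i> * H$2$1) (\<i> * H$2$2)) $ 1 $ 1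
      = - \<i> * H$1$2 * R$2$1 + \<i> * R$1$2 * H$2$1"
  proof -
    obtain r1 r2 r3 r4 where Rm: "R = M2 r1 r2 r3 r4" by (rule M2_cases)
    show ?thesis unfolding Rm by (simp add: algebra_simps)
  qed
  ultimately show ?thesis by simp
qed

lemma Re_deriv_real:
  assumes "(P has_field_derivative P') (at (of_real x))"
  shows "((\<lambda>t. Re (P (of_real t))) has_real_derivative Re P') (at x)"
proof -
  have "((\<lambda>t. P (of_real t)) has_vector_derivative P') (at x)"
    using has_vector_derivative_real_field[OF assms] .
  then have "((\<lambda>t. P (of_real t)) has_derivative (\<lambda>h. h *\<^sub>R P')) (at x)"
    by (simp add: has_vector_derivative_def)
  from has_derivative_Re[OF this]
  have "((\<lambda>t. Re (P (of_real t))) has_derivative (\<lambda>h. Re (h *\<^sub>R P'))) (at x)" .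
  moreover have "(\<lambda>h. Re (h *\<^sub>R P')) = (*) (Re P')" by (auto simp: mult.commute)
  ultimately show ?thesis by (simp add: has_field_derivative_def)
qed

lemma p_deriv:
  assumes H: "hermitian H" and R: "hermitian R"
  shows "((\<lambda>t. Re ((evolve H t R) $ 1 $ 1)) has_real_derivative 2 * Im (H$1$2 * R$2$1)) (at 0)"
proof -
  obtain U d where U: "unitary U" and Hd: "H = U ** diagm (\<lambda>i. complex_of_real (d i)) ** adj U"
    using spectral_2[OF H] by blast
  have d1: "((\<lambda>t. Re ((Ez U d (of_real t) ** R ** Fz U d (of_real t)) $ 1 $ 1)) has_real_derivative
        Re (- \<i> * H$1$2 * R$2$1 + \<i> * R$1$2 * H$2$1)) (at 0)"
  proof -
    have pd: "((\<lambda>z. (Ez U d z ** R ** Fz U d z) $ 1 $ 1) has_field_derivative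
          (- \<i> * H$1$2 * R$2$1 + \<i> * R$1$2 * H$2$1)) (at (of_real 0))"
      using P_deriv[OF U Hd, of R] by simp
    show ?thesis using Re_deriv_real[OF pd] by simp
  qed
  have eqv: "Re (- \<i> * H$1$2 * R$2$1 + \<i> * R$1$2 * H$2$1) = 2 * Im (H$1$2 * R$2$1)"
  proof -
    obtain r1 r2 r3 r4 where Rm: "R = M2 r1 r2 r3 r4" by (rule M2_cases)
    obtain h1 h2 h3 h4 where Hm: "H = M2 h1 h2 h3 h4" by (rule M2_cases)
    have "r2 = cnj r3" "h3 = cnj h2" using R H unfolding Rm Hm hermitian_def by auto
    then show ?thesis unfolding Rm Hm by (simp add: algebra_simps)
  qed
  show ?thesis unfolding evolve_eq[OF U Hd] using d1 unfolding eqv .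
qed

lemma evolve0: "hermitian H \<Longrightarrow> evolve H 0 R = R"
proof -
  assume H: "hermitian H"
  obtain U d where U: "unitary U" and Hd: "H = U ** diagm (\<lambda>i. complex_of_real (d i)) ** adj U"
    using spectral_2[OF H] by blast
  show ?thesis unfolding evolve_eq[OF U Hd] using Ez0[OF U] Fz0[OF U] by simp
qed


lemma hb_deriv:
  assumes x: "0 < x" "x < 1"
  shows "(hb has_real_derivative log 2 ((1 - x) / x)) (at x)"
proof -
  have d1: "((\<lambda>y. log 2 y) has_real_derivative 1 / (ln 2 * x)) (at x)" using x(1) by (rule DERIV_log)
  have d2': "((\<lambda>y. log 2 y) has_real_derivative 1 / (ln 2 * (1 - x))) (at (1 - x))" using x by (intro DERIV_log) simp
  have d2: "((\<lambda>y. log 2 (1 - y)) has_real_derivative 1 / (ln 2 * (1 - x)) * (- 1)) (at x)"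
  proof -
    have "((\<lambda>y. 1 - y) has_real_derivative - 1) (at x)" by (auto intro!: derivative_eq_intros)
    from DERIV_chain2[of "\<lambda>y. log 2 y" _ "\<lambda>y. 1 - y" x, OF d2' this] show ?thesis by simp
  qed
  have d: "(hb has_real_derivative - ((1 * log 2 x + 1 / (ln 2 * x) * x) + ((0 - 1) * log 2 (1 - x) + 1 / (ln 2 * (1 - x)) * (- 1) * (1 - x)))) (at x)"
    unfolding hb_def[abs_def]
    by (rule DERIV_minus[OF DERIV_add[OF DERIV_mult[OF DERIV_ident d1] DERIV_mult[OF DERIV_diff[OF DERIV_const DERIV_ident] d2]]])
  have e1: "1 / (ln 2 * x) * x = 1 / ln 2" using x by simp
  have e2: "1 / (ln 2 * (1 - x)) * (- 1) * (1 - x) = - (1 / ln 2)" using x by simp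
  have e3: "log 2 ((1 - x) / x) = log 2 (1 - x) - log 2 x" using x by (simp add: log_divide)
  show ?thesis using d unfolding e1 e2 e3 by simp
qed

lemma coh_rate_interior:
  assumes H: "hermitian H" and R: "density_matrix R" and p: "0 < Re (R$1$1)" "Re (R$1$1) < 1"
  shows "coh_rate H R = log 2 ((1 - Re (R$1$1)) / Re (R$1$1)) * (2 * Im (H$1$2 * R$2$1))"
proof -
  have hR: "hermitian R" using R unfolding density_matrix_def by auto
  have e: "(\<lambda>t. coh_rel (evolve H t R)) = (\<lambda>t. hb (Re ((evolve H t R) $ 1 $ 1)) - vN_entropy R)"
    using coh_rel_evolve[OF H R] by auto
  have "((\<lambda>t. hb (Re ((evolve H t R) $ 1 $ 1))) has_real_derivative
          log 2 ((1 - Re (R$1$1)) / Re (R$1$1)) * (2 * Im (H$1$2 * R$2$1))) (at 0)"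
  proof -
    have hd: "(hb has_real_derivative log 2 ((1 - Re (R$1$1)) / Re (R$1$1))) (at (Re ((evolve H 0 R) $ 1 $ 1)))"
      using hb_deriv[OF p] evolve0[OF H] by simp
    show ?thesis using DERIV_chain2[OF hd p_deriv[OF H hR]] by simp
  qed
  then have "((\<lambda>t. hb (Re ((evolve H t R) $ 1 $ 1)) - vN_entropy R) has_real_derivative
          log 2 ((1 - Re (R$1$1)) / Re (R$1$1)) * (2 * Im (H$1$2 * R$2$1))) (at 0)"
    using DERIV_diff[OF _ DERIV_const] by fastforce
  then show ?thesis unfolding coh_rate_def e by (rule DERIV_imp_deriv)
qed

lemma density_facts:
  assumes R: "density_matrix R"
  shows "R$1$1 = of_real (Re (R$1$1))" "R$2$2 = 1 - of_real (Re (R$1$1))" "R$1$2 = cnj (R$2$1)"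
    "0 \<le> Re (R$1$1)" "Re (R$1$1) \<le> 1"
    "(cmod (R$2$1))^2 \<le> Re (R$1$1) * (1 - Re (R$1$1))"
proof -
  obtain a b c e where Rm: "R = M2 a b c e" by (rule M2_cases)
  have h: "hermitian R" and t: "trace R = 1" and q: "\<And>x. 0 \<le> Re (\<Sum>i\<in>UNIV. \<Sum>j\<in>UNIV. cnj (x $ i) * R $ i $ j * x $ j)"
    using R unfolding density_matrix_def by auto
  have ha: "cnj a = a" "cnj e = e" "b = cnj c" using h unfolding Rm hermitian_def by auto
  define p where "p = Re a"
  have a: "a = of_real p" unfolding p_def using ha by (simp add: complex_eq_iff)
  have e: "e = 1 - of_real p" using t ha unfolding Rm a by (simp add: complex_eq_iff)
  show "R$1$1 = of_real (Re (R$1$1))" "R$2$2 = 1 - of_real (Re (R$1$1))" "R$1$2 = cnj (R$2$1)"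
    unfolding Rm using a e ha by simp_all
  have qf: "0 \<le> Re (cnj x1 * a * x1 + cnj x1 * b * x2 + cnj x2 * c * x1 + cnj x2 * e * x2)" for x1 x2
    using q[of "vector [x1, x2]"] unfolding Rm quad_M2 by simp
  have p0: "0 \<le> p" using qf[of 1 0] by (simp add: a)
  have p1: "p \<le> 1" using qf[of 0 1] by (simp add: e)
  show "0 \<le> Re (R$1$1)" "Re (R$1$1) \<le> 1" using p0 p1 by (simp_all add: Rm p_def)
  have c2: "(cmod c)^2 = (Re c)^2 + (Im c)^2" by (simp add: cmod_power2)
  have A1: "0 \<le> p * (p * (1 - p) - (cmod c)^2)"
    using qf[of "- b" "of_real p"] unfolding a e ha(3) c2 by (simp add: algebra_simps power2_eq_square)
  have A2: "0 \<le> (1 - p) * (p * (1 - p) - (cmod c)^2)"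
    using qf[of "of_real (1 - p)" "- c"] unfolding a e ha(3) c2 by (simp add: algebra_simps power2_eq_square)
  have "(cmod c)^2 \<le> p * (1 - p)"
  proof (cases "p > 0")
    case True then show ?thesis using A1 by (simp add: zero_le_mult_iff)
  next
    case False then have "1 - p > 0" using p0 by simp
    then show ?thesis using A2 by (simp add: zero_le_mult_iff)
  qed
  then show "(cmod (R$2$1))^2 \<le> Re (R$1$1) * (1 - Re (R$1$1))" by (simp add: Rm p_def)
qed


lemma hb_0[simp]: "hb 0 = 0" by (simp add: hb_def)

lemma hb_sym: "hb (1 - x) = hb x" by (simp add: hb_def algebra_simps)

lemma hb_nonneg: assumes "0 \<le> x" "x \<le> 1" shows "0 \<le> hb x"
proof -
  have a: "x * log 2 x \<le> 0" if "0 \<le> x" "x \<le> 1" for x :: real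
  proof (cases "x = 0")
    case False then have "log 2 x \<le> 0" using that by simp
    then show ?thesis using that by (simp add: mult_nonneg_nonpos)
  qed simp
  show ?thesis using a[of x] a[of "1 - x"] assms unfolding hb_def by simp
qed

lemma hb_mono: assumes "0 \<le> x" "x \<le> y" "y \<le> 1/2" shows "hb x \<le> hb y"
proof (cases "x = 0")
  case True then show ?thesis using hb_nonneg[of y] assms by simp
next
  case False
  then have x0: "0 < x" using assms by simp
  show ?thesis
  proof (rule deriv_nonneg_imp_mono[of x y hb "\<lambda>z. log 2 ((1 - z) / z)"])
    fix z assume z: "z \<in> {x..y}"
    then have z': "0 < z" "z \<le> 1/2" using x0 assms by auto
    show "(hb has_real_derivative log 2 ((1 - z) / z)) (at z)" using z' by (intro hb_deriv) auto
    have "1 \<le> (1 - z) / z" using z' by (simp add: field_simps)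
    then show "0 \<le> log 2 ((1 - z) / z)" by simp
  qed (use assms in auto)
qed

lemma lin_bound:
  assumes d: "(f has_field_derivative f') (at 0)" and f0: "f 0 = 0"
  shows "\<exists>K. \<forall>\<^sub>F t in at (0::real). cmod (f (of_real t)) \<le> K * \<bar>t\<bar>"
proof -
  have "((\<lambda>h. f h / h) \<longlongrightarrow> f') (at 0)" using d f0 unfolding DERIV_def by simp
  then have "((\<lambda>h. cmod (f h / h)) \<longlongrightarrow> cmod f') (at 0)" by (rule tendsto_norm)
  then have "\<forall>\<^sub>F h in at 0. cmod (f h / h) < cmod f' + 1" by (rule order_tendstoD) simp
  then obtain dd where dd: "dd > 0" and H: "\<And>x. x \<noteq> 0 \<Longrightarrow> dist x 0 < dd \<Longrightarrow> cmod (f x / x) < cmod f' + 1"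
    unfolding eventually_at by auto
  have "\<forall>\<^sub>F t in at (0::real). cmod (f (of_real t)) \<le> (cmod f' + 1) * \<bar>t\<bar>"
    unfolding eventually_at
  proof (intro exI[of _ dd] conjI dd ballI impI)
    fix t :: real assume t: "t \<noteq> 0 \<and> dist t 0 < dd"
    then have "cmod (f (of_real t) / of_real t) < cmod f' + 1" using H[of "of_real t"] by simp
    then have "cmod (f (of_real t)) / \<bar>t\<bar> < cmod f' + 1" by (simp add: norm_divide)
    then show "cmod (f (of_real t)) \<le> (cmod f' + 1) * \<bar>t\<bar>" using t by (simp add: field_simps)
  qed
  then show ?thesis by blast
qed

lemma boundary_deriv:
  assumes de: "(e has_field_derivative e') (at 0)" and e0: "e 0 = 0"
    and df: "(f has_field_derivative f') (at 0)" and f0: "f 0 = 0"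
    and nn: "\<And>t. 0 \<le> Re (e (of_real t) * f (of_real t))"
  shows "((\<lambda>t. hb (Re (e (of_real t) * f (of_real t)))) has_real_derivative 0) (at 0)"
proof -
  define p where "p = (\<lambda>t. Re (e (of_real t) * f (of_real t)))"
  obtain K1 where K1: "\<forall>\<^sub>F t in at (0::real). cmod (e (of_real t)) \<le> K1 * \<bar>t\<bar>" using lin_bound[OF de e0] by blast
  obtain K2 where K2: "\<forall>\<^sub>F t in at (0::real). cmod (f (of_real t)) \<le> K2 * \<bar>t\<bar>" using lin_bound[OF df f0] by blast
  define K where "K = \<bar>K1 * K2\<bar> + 1"
  have Kpos: "K > 0" unfolding K_def by simp
  have "((\<lambda>t::real. K * t^2) \<longlongrightarrow> K * 0^2) (at 0)" by (intro tendsto_intros)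
  then have small: "\<forall>\<^sub>F t in at (0::real). K * t^2 < 1/2" by (rule order_tendstoD) simp
  have "\<forall>\<^sub>F t in at (0::real). p t \<le> K * t^2"
    using K1 K2
  proof eventually_elim
    case (elim t)
    have "p t \<le> cmod (e (of_real t) * f (of_real t))" unfolding p_def by (rule complex_Re_le_cmod)
    also have "\<dots> = cmod (e (of_real t)) * cmod (f (of_real t))" by (simp add: norm_mult)
    also have "\<dots> \<le> (K1 * \<bar>t\<bar>) * (K2 * \<bar>t\<bar>)"
    proof -
      have "0 \<le> K1 * \<bar>t\<bar>" using elim(1) norm_ge_zero[of "e (of_real t)"] by linarith
      then show ?thesis using elim by (intro mult_mono) auto
    qed
    also have "\<dots> = (K1 * K2) * t^2" by (simp add: power2_eq_square algebra_simps)
    also have "\<dots> \<le> K * t^2" unfolding K_def by (intro mult_right_mono) auto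
    finally show ?case .
  qed
  with small have ev: "\<forall>\<^sub>F t in at (0::real). norm (hb (p t) / t) \<le> hb (K * t^2) / \<bar>t\<bar>"
  proof eventually_elim
    case (elim t)
    have "0 \<le> p t" unfolding p_def by (rule nn)
    then have "hb (p t) \<le> hb (K * t^2)" and "0 \<le> hb (p t)"
      using elim by (auto intro!: hb_mono hb_nonneg)
    then show ?case by (simp add: divide_right_mono)
  qed
  have lim: "((\<lambda>t::real. hb (K * t^2) / \<bar>t\<bar>) \<longlongrightarrow> 0) (at 0)"
    unfolding hb_def using Kpos by real_asymp
  have "((\<lambda>t. hb (p t) / t) \<longlongrightarrow> 0) (at 0)"
    by (rule Lim_null_comparison[OF ev lim])
  moreover have "p 0 = 0" unfolding p_def using e0 f0 by simp
  ultimately have "((\<lambda>h. (hb (p (0 + h)) - hb (p 0)) / h) \<longlongrightarrow> 0) (at 0)" by simp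
  then show ?thesis unfolding DERIV_def p_def .
qed

lemma Ez_entry_deriv: "\<exists>D. ((\<lambda>z. Ez U d z $ i $ j) has_field_derivative D) (at 0)"
proof -
  have "mhasderiv (Ez U d) (U ** diagm (\<lambda>k. (- \<i> * complex_of_real (d k)) * exp ((- \<i> * complex_of_real (d k)) * 0)) ** adj U) 0"
    unfolding Ez_def by (intro mhd_rconst mhd_lconst mhd_diag)
  then show ?thesis unfolding mhasderiv_def by blast
qed

lemma Fz_entry_deriv: "\<exists>D. ((\<lambda>z. Fz U d z $ i $ j) has_field_derivative D) (at 0)"
proof -
  have "mhasderiv (Fz U d) (U ** diagm (\<lambda>k. (\<i> * complex_of_real (d k)) * exp ((\<i> * complex_of_real (d k)) * 0)) ** adj U) 0"
    unfolding Fz_def by (intro mhd_rconst mhd_lconst mhd_diag)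
  then show ?thesis unfolding mhasderiv_def by blast
qed

lemma evolve_density: "hermitian H \<Longrightarrow> density_matrix R \<Longrightarrow> density_matrix (evolve H t R)"
proof -
  assume H: "hermitian H" and R: "density_matrix R"
  obtain U d where U: "unitary U" and Hd: "H = U ** diagm (\<lambda>i. complex_of_real (d i)) ** adj U"
    using spectral_2[OF H] by blast
  show ?thesis unfolding evolve_eq[OF U Hd] Fz_adj
    by (rule density_conj[OF unitary_Ez[OF U] R])
qed

lemma pick22: "((A::qmat) ** M2 0 0 0 1 ** (B::qmat)) $ 1 $ 1 = A$1$2 * B$2$1"
  by (cases A rule: M2_cases; cases B rule: M2_cases) simp

lemma pick11: "((A::qmat) ** M2 1 0 0 0 ** (B::qmat)) $ 2 $ 2 = A$2$1 * B$1$2"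
  by (cases A rule: M2_cases; cases B rule: M2_cases) simp

lemma coh_rate_boundary:
  assumes H: "hermitian H" and R: "density_matrix R" and p: "Re (R$1$1) = 0 \<or> Re (R$1$1) = 1"
  shows "coh_rate H R = 0"
proof -
  obtain U d where U: "unitary U" and Hd: "H = U ** diagm (\<lambda>i. complex_of_real (d i)) ** adj U"
    using spectral_2[OF H] by blast
  note df = density_facts[OF R]
  have "(cmod (R$2$1))^2 \<le> 0" using df(6) p by auto
  then have r21: "R$2$1 = 0" by simp
  have S: "density_matrix (evolve H t R)" for t by (rule evolve_density[OF H R])
  have ev: "evolve H t R = Ez U d (of_real t) ** R ** Fz U d (of_real t)" for t by (rule evolve_eq[OF U Hd])
  have E0: "Ez U d 0 = mat 1" "Fz U d 0 = mat 1" using Ez0[OF U] Fz0[OF U] .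
  have hbeq: "(\<lambda>t. coh_rel (evolve H t R)) = (\<lambda>t. hb (Re ((evolve H t R) $ 1 $ 1)) - vN_entropy R)"
    using coh_rel_evolve[OF H R] by auto
  have key: "((\<lambda>t. hb (Re ((evolve H t R) $ 1 $ 1))) has_real_derivative 0) (at 0)"
    using p
  proof
    assume p0: "Re (R$1$1) = 0"
    have Rm: "R = M2 0 0 0 1" using df(1,2,3) r21 p0 by (subst M2_eta) simp
    define e where "e = (\<lambda>z. Ez U d z $ 1 $ 2)"
    define f where "f = (\<lambda>z. Fz U d z $ 2 $ 1)"
    have sig: "(evolve H t R) $ 1 $ 1 = e (of_real t) * f (of_real t)" for t
      unfolding ev unfolding e_def f_def Rm pick22 ..
    obtain De Df where De: "(e has_field_derivative De) (at 0)" and Df: "(f has_field_derivative Df) (at 0)"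
      using Ez_entry_deriv[of U d 1 2] Fz_entry_deriv[of U d 2 1] unfolding e_def f_def by blast
    have "e 0 = 0" "f 0 = 0" unfolding e_def f_def E0 by (simp_all add: mat1_M2)
    from boundary_deriv[OF De this(1) Df this(2)]
    show ?thesis unfolding sig using density_facts(4)[OF S] sig by simp
  next
    assume p1: "Re (R$1$1) = 1"
    have Rm: "R = M2 1 0 0 0" using df(1,2,3) r21 p1 by (subst M2_eta) simp
    define e where "e = (\<lambda>z. Ez U d z $ 2 $ 1)"
    define f where "f = (\<lambda>z. Fz U d z $ 1 $ 2)"
    have sig: "(evolve H t R) $ 2 $ 2 = e (of_real t) * f (of_real t)" for t
      unfolding ev unfolding e_def f_def Rm pick11 ..
    have hs: "hb (Re ((evolve H t R) $ 1 $ 1)) = hb (Re (e (of_real t) * f (of_real t)))" for t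
    proof -
      have "Re ((evolve H t R) $ 2 $ 2) = 1 - Re ((evolve H t R) $ 1 $ 1)"
        using density_facts(2)[OF S, of t] by simp
      then show ?thesis unfolding sig[symmetric] by (metis hb_sym diff_diff_cancel)
    qed
    obtain De Df where De: "(e has_field_derivative De) (at 0)" and Df: "(f has_field_derivative Df) (at 0)"
      using Ez_entry_deriv[of U d 2 1] Fz_entry_deriv[of U d 1 2] unfolding e_def f_def by blast
    have "e 0 = 0" "f 0 = 0" unfolding e_def f_def E0 by (simp_all add: mat1_M2)
    have nn: "0 \<le> Re (e (of_real t) * f (of_real t))" for t
    proof -
      have "Re ((evolve H t R) $ 2 $ 2) = 1 - Re ((evolve H t R) $ 1 $ 1)"
        using density_facts(2)[OF S, of t] by simp
      then show ?thesis unfolding sig[symmetric] using density_facts(5)[OF S, of t] by simp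
    qed
    from boundary_deriv[OF De \<open>e 0 = 0\<close> Df \<open>f 0 = 0\<close> nn]
    show ?thesis unfolding hs .
  qed
  have "((\<lambda>t. hb (Re ((evolve H t R) $ 1 $ 1)) - vN_entropy R) has_real_derivative 0 - 0) (at 0)"
    by (rule DERIV_diff[OF key DERIV_const])
  then show ?thesis unfolding coh_rate_def hbeq by (simp add: DERIV_imp_deriv)
qed

definition Gf :: "real \<Rightarrow> real \<Rightarrow> real" where
  "Gf c p = 2 * c * sqrt (p * (1 - p)) * log 2 ((1 - p) / p)"

lemma Gf_half[simp]: "Gf c (1/2) = 0" by (simp add: Gf_def)
lemma Gf_0[simp]: "Gf c 0 = 0" by (simp add: Gf_def)
lemma Gf_1[simp]: "Gf c 1 = 0" by (simp add: Gf_def)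

lemma Gf_upper_nonpos:
  assumes c: "0 \<le> c" and p: "1/2 \<le> p" "p \<le> 1"
  shows "Gf c p \<le> 0"
proof -
  have "log 2 ((1 - p) / p) \<le> 0"
  proof (cases "p = 1")
    case False
    then have "0 < (1 - p) / p" "(1 - p) / p \<le> 1" using p by (auto simp: field_simps)
    then show ?thesis by simp
  qed (simp add: log_def)
  moreover have "0 \<le> sqrt (p * (1 - p))" using p by simp
  ultimately have "sqrt (p * (1 - p)) * log 2 ((1 - p) / p) \<le> 0" by (rule mult_nonneg_nonpos[rotated])
  then have "c * (sqrt (p * (1 - p)) * log 2 ((1 - p) / p)) \<le> 0" using c by (rule mult_nonneg_nonpos[rotated])
  then show ?thesis unfolding Gf_def by (simp add: mult.assoc)
qed

lemma Gf_cont: "continuous_on {0..1/2} (Gf c)"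
proof -
  have "continuous (at x within {0..1/2}) (Gf c)" if x: "x \<in> {0..1/2}" for x
  proof (cases "x = 0")
    case True
    have "((\<lambda>p. sqrt (p * (1 - p)) * log 2 ((1 - p) / p)) \<longlongrightarrow> 0) (at_right 0)" by real_asymp
    then have "((\<lambda>p. 2 * c * (sqrt (p * (1 - p)) * log 2 ((1 - p) / p))) \<longlongrightarrow> 2 * c * 0) (at_right 0)"
      by (intro tendsto_intros)
    then have "(Gf c \<longlongrightarrow> Gf c 0) (at 0 within {0..1/2})"
      by (simp add: at_within_Icc_at_right Gf_def[abs_def] mult.assoc)
    then show ?thesis using True by (simp add: continuous_within)
  next
    case False
    then have "0 < x" "x < 1" using x by auto
    then have "isCont (Gf c) x" unfolding Gf_def[abs_def] by (intro continuous_intros) auto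
    then show ?thesis by (rule continuous_at_imp_continuous_at_within)
  qed
  then show ?thesis by (simp add: continuous_on_eq_continuous_within)
qed

lemma Gf_max:
  assumes c: "0 \<le> c"
  shows "\<exists>p0. 0 < p0 \<and> p0 < 1 \<and> (\<forall>p\<in>{0..1}. Gf c p \<le> Gf c p0)"
proof -
  obtain q where q: "q \<in> {0..1/2}" and qm: "\<And>y. y \<in> {0..1/2} \<Longrightarrow> Gf c y \<le> Gf c q"
    using continuous_attains_sup[OF compact_Icc _ Gf_cont, of c] by auto
  have all: "Gf c p \<le> Gf c q" if "p \<in> {0..1}" for p
  proof (cases "p \<le> 1/2")
    case True then show ?thesis using qm that by auto
  next
    case False
    then have "Gf c p \<le> 0" using Gf_upper_nonpos[OF c, of p] that by auto
    also have "0 = Gf c (1/2)" by simp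
    also have "\<dots> \<le> Gf c q" by (rule qm) auto
    finally show ?thesis .
  qed
  show ?thesis
  proof (cases "q = 0")
    case True
    have "Gf c p \<le> Gf c (1/2)" if "p \<in> {0..1}" for p using all[OF that] True by simp
    then show ?thesis by (intro exI[of _ "1/2"]) auto
  next
    case False
    then show ?thesis using q all by (intro exI[of _ q]) auto
  qed
qed

lemma rate_bound:
  assumes H: "hermitian H" and R: "density_matrix R"
  shows "coh_rate H R \<le> max (Gf (cmod (H$1$2)) (Re (R$1$1))) (Gf (cmod (H$1$2)) (1 - Re (R$1$1)))"
proof -
  define p where "p = Re (R$1$1)"
  note df = density_facts[OF R, folded p_def]
  show ?thesis
  proof (cases "p = 0 \<or> p = 1")
    case True
    then have "coh_rate H R = 0" using coh_rate_boundary[OF H R] unfolding p_def by blast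
    then show ?thesis using True unfolding p_def[symmetric] by auto
  next
    case False
    then have p01: "0 < p" "p < 1" using df(4,5) by auto
    define L where "L = log 2 ((1 - p) / p)"
    define X where "X = 2 * Im (H$1$2 * R$2$1)"
    define S where "S = 2 * cmod (H$1$2) * sqrt (p * (1 - p))"
    have rate: "coh_rate H R = L * X" unfolding L_def X_def p_def using coh_rate_interior[OF H R] p01 p_def by simp
    have "cmod (R$2$1) \<le> sqrt (p * (1 - p))" using df(6) by (rule real_le_rsqrt)
    then have b: "cmod (H$1$2) * cmod (R$2$1) \<le> cmod (H$1$2) * sqrt (p * (1 - p))"
      by (rule mult_left_mono) simp
    have a: "\<bar>Im (H$1$2 * R$2$1)\<bar> \<le> cmod (H$1$2) * cmod (R$2$1)"
      using abs_Im_le_cmod[of "H$1$2 * R$2$1"] by (simp add: norm_mult)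
    have "\<bar>X\<bar> \<le> S" unfolding X_def S_def using a b by simp
    have "L * X \<le> \<bar>L * X\<bar>" by (rule abs_ge_self)
    also have "\<dots> = \<bar>L\<bar> * \<bar>X\<bar>" by (rule abs_mult)
    also have "\<dots> \<le> \<bar>L\<bar> * S" using \<open>\<bar>X\<bar> \<le> S\<close> by (rule mult_left_mono) simp
    finally have "L * X \<le> \<bar>L\<bar> * S" .
    moreover have "Gf (cmod (H$1$2)) p = L * S" unfolding Gf_def L_def S_def by simp
    moreover have "Gf (cmod (H$1$2)) (1 - p) = - L * S"
    proof -
      have "log 2 ((1 - (1 - p)) / (1 - p)) = - L" unfolding L_def using p01 by (simp add: log_divide)
      then show ?thesis unfolding Gf_def S_def by (simp add: algebra_simps)
    qed
    ultimately show ?thesis unfolding rate p_def[symmetric] by (cases "L \<ge> 0") auto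
  qed
qed

lemma pure_M2: "pure_state \<psi> = M2 (\<psi>$1 * cnj (\<psi>$1)) (\<psi>$1 * cnj (\<psi>$2)) (\<psi>$2 * cnj (\<psi>$1)) (\<psi>$2 * cnj (\<psi>$2))"
  by (simp add: vec_eq_iff forall_2 pure_state_def M2_def)

lemma density_pure:
  assumes n: "(cmod (\<psi>$1))^2 + (cmod (\<psi>$2))^2 = 1"
  shows "density_matrix (pure_state \<psi>)"
  unfolding density_matrix_def
proof (intro conjI allI)
  show "hermitian (pure_state \<psi>)" unfolding hermitian_def pure_M2 by (simp add: mult.commute)
  have "\<psi>$1 * cnj (\<psi>$1) + \<psi>$2 * cnj (\<psi>$2) = of_real ((cmod (\<psi>$1))^2 + (cmod (\<psi>$2))^2)"
    by (simp only: of_real_add complex_norm_square)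
  then show "trace (pure_state \<psi>) = 1" unfolding pure_M2 using n by simp
  fix x :: "complex^2"
  define z where "z = cnj (x$1) * \<psi>$1 + cnj (x$2) * \<psi>$2"
  have "(\<Sum>i\<in>UNIV. \<Sum>j\<in>UNIV. cnj (x $ i) * pure_state \<psi> $ i $ j * x $ j) = z * cnj z"
    unfolding pure_M2 quad_M2 z_def by (simp add: algebra_simps)
  then show "0 \<le> Re (\<Sum>i\<in>UNIV. \<Sum>j\<in>UNIV. cnj (x $ i) * pure_state \<psi> $ i $ j * x $ j)"
    by (simp add: complex_mult_cnj)
qed

lemma pure_achieve:
  assumes H: "hermitian H" and p: "0 < p0" "p0 < 1"
  shows "\<exists>\<psi>. norm \<psi> = 1 \<and> density_matrix (pure_state \<psi>) \<and> coh_rate H (pure_state \<psi>) = Gf (cmod (H$1$2)) p0"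
proof -
  define h where "h = H$1$2"
  define w where "w = (if h = 0 then 1 else \<i> * cnj h / of_real (cmod h))"
  have w1: "cmod w = 1" unfolding w_def by (simp add: norm_divide norm_mult)
  have hw: "Im (h * w) = cmod h"
  proof (cases "h = 0")
    case False
    have "h * w = \<i> * (h * cnj h) / of_real (cmod h)" unfolding w_def using False by simp
    also have "\<dots> = \<i> * of_real ((cmod h)^2 / cmod h)" unfolding complex_norm_square[symmetric] by simp
    finally show ?thesis by (simp add: power2_eq_square)
  qed (simp add: w_def)
  define \<psi> where "\<psi> = (vector [of_real (sqrt p0), w * of_real (sqrt (1 - p0))] :: complex^2)"
  have ps: "\<psi>$1 = of_real (sqrt p0)" "\<psi>$2 = w * of_real (sqrt (1 - p0))" unfolding \<psi>_def by simp_all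
  have n2: "(cmod (\<psi>$1))^2 + (cmod (\<psi>$2))^2 = 1" unfolding ps using p w1 by (simp add: norm_mult)
  have nrm: "norm \<psi> = 1" unfolding norm_vec_def L2_set_def sum_2 using n2 by simp
  have D: "density_matrix (pure_state \<psi>)" by (rule density_pure[OF n2])
  have r11: "Re (pure_state \<psi> $ 1 $ 1) = p0" unfolding pure_M2 ps using p by simp
  have r21: "pure_state \<psi> $ 2 $ 1 = w * of_real (sqrt p0 * sqrt (1 - p0))" unfolding pure_M2 ps by simp
  have im: "Im (H$1$2 * pure_state \<psi> $ 2 $ 1) = sqrt (p0 * (1 - p0)) * cmod h"
    unfolding r21 h_def[symmetric] using hw by (simp add: real_sqrt_mult mult.assoc[symmetric])
  have "coh_rate H (pure_state \<psi>) = log 2 ((1 - p0) / p0) * (2 * (sqrt (p0 * (1 - p0)) * cmod h))"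
    using coh_rate_interior[OF H D] unfolding r11 im using p by simp
  also have "\<dots> = Gf (cmod (H$1$2)) p0" unfolding Gf_def h_def by (simp add: algebra_simps)
  finally show ?thesis using nrm D by blast
qed

theorem mainTheorem3:
  fixes H :: "complex^2^2"
  assumes "hermitian H"
  defines "g \<equiv> (\<lambda>p::real. 2 * cmod (H $ 1 $ 0) * sqrt (p * (1 - p)) * log 2 ((1 - p) / p))"
  shows "(\<exists>p\<in>{0..1}. g p = C_gen H) \<and> (\<forall>p\<in>{0..1}. g p \<le> C_gen H)
         \<and> (\<forall>\<rho>. density_matrix \<rho> \<longrightarrow> coh_rate H \<rho> \<le> C_gen H)
         \<and> (\<exists>\<psi>. norm \<psi> = 1 \<and> density_matrix (pure_state \<psi>) \<and> coh_rate H (pure_state \<psi>) = C_gen H)"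
proof -
  note H = assms(1)
  define c where "c = cmod (H$1$2)"
  have c0: "0 \<le> c" unfolding c_def by simp
  have H10: "H $ 1 $ 0 = H $ 1 $ 2" by (simp only: two_ne(3))
  have gG: "g p = Gf c p" for p unfolding g_def Gf_def c_def H10 ..
  obtain p0 where p0: "0 < p0" "p0 < 1" and pm: "\<And>p. p \<in> {0..1} \<Longrightarrow> Gf c p \<le> Gf c p0"
    using Gf_max[OF c0] by blast
  obtain \<psi> where \<psi>: "norm \<psi> = 1" "density_matrix (pure_state \<psi>)" "coh_rate H (pure_state \<psi>) = Gf c p0"
    using pure_achieve[OF H p0] unfolding c_def by blast
  have ub: "coh_rate H \<rho> \<le> Gf c p0" if R: "density_matrix \<rho>" for \<rho>
  proof -
    note df = density_facts[OF R]
    have "coh_rate H \<rho> \<le> max (Gf c (Re (\<rho>$1$1))) (Gf c (1 - Re (\<rho>$1$1)))"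
      using rate_bound[OF H R] unfolding c_def .
    also have "\<dots> \<le> Gf c p0" using pm[of "Re (\<rho>$1$1)"] pm[of "1 - Re (\<rho>$1$1)"] df(4,5) by auto
    finally show ?thesis .
  qed
  have CG: "C_gen H = Gf c p0"
    unfolding C_gen_def
  proof (rule cSup_eq_maximum)
    show "Gf c p0 \<in> {coh_rate H \<rho> |\<rho>. density_matrix \<rho>}" using \<psi>(2,3) by force
    show "x \<le> Gf c p0" if "x \<in> {coh_rate H \<rho> |\<rho>. density_matrix \<rho>}" for x using that ub by blast
  qed
  show ?thesis
  proof (intro conjI)
    show "\<exists>p\<in>{0..1}. g p = C_gen H" using p0 by (intro bexI[of _ p0]) (auto simp: gG CG)
    show "\<forall>p\<in>{0..1}. g p \<le> C_gen H" using pm by (simp add: gG CG)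
    show "\<forall>\<rho>. density_matrix \<rho> \<longrightarrow> coh_rate H \<rho> \<le> C_gen H" using ub by (simp add: CG)
    show "\<exists>\<psi>. norm \<psi> = 1 \<and> density_matrix (pure_state \<psi>) \<and> coh_rate H (pure_state \<psi>) = C_gen H"
      using \<psi> CG by auto
  qed
qed

end
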